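(* Let $d\geq 1$, let $\delta$ be a sufficiently small positive real number, let $P$ be a large positive integer, and let $1\leq q\leq P^{\delta}$, $1\leq a\leq q$ be integers with $(a,q)=1$. For $\alpha\in\mathfrak{M}(q,a)$, writing $\alpha=a/q+\beta$, we have $$F(\alpha)=q^{-2d-1}S(q,a)I(\beta)+O(P^{2d+2\delta}).$$
   Context: For an integer $d\geq 1$ define $f_d$: if $d=2k$ ($k\geq1$), $f_d(x_1,\ldots,x_d)=\prod_{i=1}^{k}(x_{2i-1}^2+x_{2i}^2)$; if $d=2k+1$ ($k\geq 0$), $f_d(x_1,\ldots,x_d)=x_1\prod_{i=1}^{k}(x_{2i}^2+x_{2i+1}^2)$. Let $f(x_1,\ldots,x_{2d+1})=f_d(x_1,\ldots,x_d)+f_d(x_{d+1},\ldots,x_{2d})-x_{2d+1}^d$. Let $e(\alpha)=e^{2\pi i\alpha}$, $B=\{1,\ldots,P\}^{2d+1}$, $F(\alpha)=\sum_{{\bf x}\in B}e(\alpha f({\bf x}))$, $\mathfrak{M}(q,a)=\{\alpha\in\mathbb{R}:|\alpha-a/q|\leq P^{\delta-d}\}$, $S(q,a)=\sum_{{\bf z}\bmod q}e\left(\frac{a}{q}f({\bf z})\right)$ (sum over ${\bf z}\in\{1,\ldots,q\}^{2d+1}$), and $I(\beta)=\int_{[0,P]^{2d+1}}e(\beta f(\xi))\,d\xi$. The implied constant in $O$ depends at most on $d$. *)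

theory Defs
  imports "HOL-Analysis.Analysis"
begin

text \<open>Vectors are functions on nat, indexed 1..n as in the paper.\<close>

definition ee :: "real \<Rightarrow> complex" where
  "ee t = cis (2 * pi * t)"

definition fd :: "nat \<Rightarrow> (nat \<Rightarrow> 'a::comm_ring_1) \<Rightarrow> 'a" where
  "fd d x = (if even d
     then (\<Prod>i=1..d div 2. x (2*i-1)^2 + x (2*i)^2)
     else x 1 * (\<Prod>i=1..d div 2. x (2*i)^2 + x (2*i+1)^2))"

definition ff :: "nat \<Rightarrow> (nat \<Rightarrow> 'a::comm_ring_1) \<Rightarrow> 'a" where
  "ff d x = fd d x + fd d (\<lambda>i. x (d + i)) - x (2*d+1) ^ d"

definition FF :: "nat \<Rightarrow> nat \<Rightarrow> real \<Rightarrow> complex" where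
  "FF d P \<alpha> = (\<Sum>x\<in>PiE {1..2*d+1} (\<lambda>_. {1..int P}). ee (\<alpha> * of_int (ff d x)))"

definition major_arc :: "nat \<Rightarrow> real \<Rightarrow> nat \<Rightarrow> nat \<Rightarrow> nat \<Rightarrow> real set" where
  "major_arc d \<delta> P q a = {\<alpha>. \<bar>\<alpha> - real a / real q\<bar> \<le> real P powr (\<delta> - real d)}"

definition SS :: "nat \<Rightarrow> nat \<Rightarrow> nat \<Rightarrow> complex" where
  "SS d q a = (\<Sum>z\<in>PiE {1..2*d+1} (\<lambda>_. {1..int q}). ee (real a / real q * of_int (ff d z)))"

definition II :: "nat \<Rightarrow> nat \<Rightarrow> real \<Rightarrow> complex" where
  "II d P \<beta> = (LINT \<xi> : PiE {1..2*d+1} (\<lambda>_. {0..real P}) | PiM {1..2*d+1} (\<lambda>_. lborel).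
                  ee (\<beta> * ff d \<xi>))"

end

theory Submission
  imports Defs
begin


lemma ee_add: "ee (s + t) = ee s * ee t"
  by (simp add: ee_def distrib_left cis_mult)

lemma ee_int: "ee (of_int k) = 1"
  unfolding ee_def by simp

lemma norm_ee[simp]: "norm (ee t) = 1"
  by (simp add: ee_def)

lemma ee_lip: "norm (ee s - ee t) \<le> 2 * pi * \<bar>s - t\<bar>"
proof -
  have "ee s - ee t = ee t * (ee (s - t) - 1)"
    using ee_add[of t "s-t"] by (simp add: algebra_simps)
  hence "norm (ee s - ee t) = norm (ee (s - t) - 1)" by (simp add: norm_mult)
  also have "ee (s-t) = exp (\<i> * of_real (2*pi*(s-t)))"
    by (simp add: ee_def cis_conv_exp mult.commute)
  also have "norm (exp (\<i> * of_real (2*pi*(s-t))) - 1) = 2 * \<bar>sin (2*pi*(s-t)/2)\<bar>"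
    by (rule dist_exp_i_1)
  also have "\<dots> \<le> 2 * \<bar>2*pi*(s-t)/2\<bar>" using abs_sin_x_le_abs_x by simp
  also have "\<dots> = 2*pi*\<bar>s-t\<bar>" by (simp add: abs_mult)
  finally show ?thesis .
qed

lemma prod_diff_bound:
  fixes u v :: "'a \<Rightarrow> real"
  assumes "finite A" "\<And>j. j \<in> A \<Longrightarrow> \<bar>u j\<bar> \<le> U" "\<And>j. j \<in> A \<Longrightarrow> \<bar>v j\<bar> \<le> U"
    "\<And>j. j \<in> A \<Longrightarrow> \<bar>u j - v j\<bar> \<le> D"
  shows "\<bar>prod u A - prod v A\<bar> \<le> real (card A) * U ^ (card A - 1) * D"
  using assms
proof (induction A rule: finite_induct)
  case empty thus ?case by simp
next
  case (insert x F)
  have U0: "0 \<le> U" using insert(4)[of x] by auto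
  have D0: "0 \<le> D" using insert(6)[of x] by auto
  have IH: "\<bar>prod u F - prod v F\<bar> \<le> real (card F) * U ^ (card F - 1) * D"
    using insert by auto
  have pu: "\<bar>prod u F\<bar> \<le> U ^ card F"
  proof -
    have "(\<Prod>j\<in>F. \<bar>u j\<bar>) \<le> (\<Prod>j\<in>F. U)" by (rule prod_mono) (use insert in auto)
    thus ?thesis by (simp add: abs_prod)
  qed
  have "prod u (insert x F) - prod v (insert x F) = (u x - v x) * prod u F + v x * (prod u F - prod v F)"
    using insert by (simp add: algebra_simps)
  hence "\<bar>prod u (insert x F) - prod v (insert x F)\<bar> \<le> \<bar>u x - v x\<bar> * \<bar>prod u F\<bar> + \<bar>v x\<bar> * \<bar>prod u F - prod v F\<bar>"
    by (simp add: abs_mult) (metis abs_mult abs_triangle_ineq)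
  also have "\<dots> \<le> D * U ^ card F + U * (real (card F) * U ^ (card F - 1) * D)"
    by (intro add_mono mult_mono IH pu) (use insert U0 D0 in auto)
  also have "\<dots> = real (card (insert x F)) * U ^ (card (insert x F) - 1) * D"
  proof (cases "card F")
    case 0 thus ?thesis using insert by simp
  next
    case (Suc m) thus ?thesis using insert by (simp add: algebra_simps)
  qed
  finally show ?case .
qed



lemma sq_diff_bound:
  fixes a b P D :: real
  assumes "0 \<le> a" "a \<le> P" "0 \<le> b" "b \<le> P" "\<bar>a - b\<bar> \<le> D"
  shows "\<bar>a^2 - b^2\<bar> \<le> 2 * P * D"
proof -
  have "\<bar>a^2 - b^2\<bar> = \<bar>a - b\<bar> * \<bar>a + b\<bar>" by (simp add: power2_eq_square abs_mult[symmetric] algebra_simps)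
  also have "\<dots> \<le> D * (2*P)" by (rule mult_mono) (use assms in auto)
  finally show ?thesis by (simp add: mult_ac)
qed

lemma pair_bound:
  fixes a b a' b' P D :: real
  assumes "0 \<le> a" "a \<le> P" "0 \<le> b" "b \<le> P" "\<bar>a - a'\<bar> \<le> D"
     "0 \<le> a'" "a' \<le> P" "0 \<le> b'" "b' \<le> P" "\<bar>b - b'\<bar> \<le> D"
  shows "\<bar>(a^2 + b^2) - (a'^2 + b'^2)\<bar> \<le> 4 * P * D" "\<bar>a^2 + b^2\<bar> \<le> 2 * P^2"
proof -
  have "\<bar>a^2 - a'^2\<bar> \<le> 2*P*D" "\<bar>b^2 - b'^2\<bar> \<le> 2*P*D"
    using sq_diff_bound assms by blast+
  thus "\<bar>(a^2 + b^2) - (a'^2 + b'^2)\<bar> \<le> 4 * P * D" by linarith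
  have "a^2 \<le> P^2" "b^2 \<le> P^2" using assms by (auto intro: power_mono)
  thus "\<bar>a^2 + b^2\<bar> \<le> 2 * P^2" by simp
qed

lemma fd_lip:
  fixes x y :: "nat \<Rightarrow> real" and P D :: real
  assumes b: "\<And>i. 1 \<le> i \<Longrightarrow> i \<le> d \<Longrightarrow> 0 \<le> x i \<and> x i \<le> P \<and> 0 \<le> y i \<and> y i \<le> P \<and> \<bar>x i - y i\<bar> \<le> D"
    and d: "d \<ge> 1"
  shows "\<bar>fd d x - fd d y\<bar> \<le> real d * 2^d * P^(d-1) * D"
proof -
  have P0: "0 \<le> P" and D0: "0 \<le> D" using b[of 1] d by auto
  define k where "k = d div 2"
  let ?u = "\<lambda>i. x (2*i-1)^2 + x (2*i)^2"
  let ?v = "\<lambda>i. y (2*i-1)^2 + y (2*i)^2"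
  let ?u' = "\<lambda>i. x (2*i)^2 + x (2*i+1)^2"
  let ?v' = "\<lambda>i. y (2*i)^2 + y (2*i+1)^2"
  show ?thesis
  proof (cases "even d")
    case True
    have k1: "k \<ge> 1" "d = 2*k" using True d k_def by auto
    have "\<bar>prod ?u {1..k} - prod ?v {1..k}\<bar> \<le> real (card {1..k}) * (2*P^2) ^ (card {1..k} - 1) * (4*P*D)"
    proof (rule prod_diff_bound)
      fix j assume j: "j \<in> {1..k}"
      have h1: "0 \<le> x (2*j-1) \<and> x (2*j-1) \<le> P \<and> 0 \<le> y (2*j-1) \<and> y (2*j-1) \<le> P \<and> \<bar>x (2*j-1) - y (2*j-1)\<bar> \<le> D"
        using j k1 by (intro b) auto
      have h2: "0 \<le> x (2*j) \<and> x (2*j) \<le> P \<and> 0 \<le> y (2*j) \<and> y (2*j) \<le> P \<and> \<bar>x (2*j) - y (2*j)\<bar> \<le> D"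
        using j k1 by (intro b) auto
      show "\<bar>?u j\<bar> \<le> 2*P^2" "\<bar>?v j\<bar> \<le> 2*P^2" "\<bar>?u j - ?v j\<bar> \<le> 4*P*D"
        using pair_bound[of "x (2*j-1)" P "x (2*j)" "y (2*j-1)" D "y (2*j)"]
              pair_bound[of "y (2*j-1)" P "y (2*j)" "x (2*j-1)" D "x (2*j)"] h1 h2
        by (auto simp: abs_minus_commute)
    qed auto
    also have "\<dots> = real k * 2^(k+1) * P^(2*k-1) * D"
    proof -
      obtain m where m: "k = Suc m" using k1 by (cases k) auto
      show ?thesis by (simp add: m power_mult_distrib power_mult[symmetric] algebra_simps)
    qed
    also have "\<dots> \<le> real d * 2^d * P^(d-1) * D"
    proof -
      have "real k * 2^(k+1) \<le> real d * 2^d"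
        by (intro mult_mono power_increasing) (use k1 in auto)
      hence "real k * 2^(k+1) * (P^(d-1)*D) \<le> real d * 2^d * (P^(d-1)*D)"
        by (rule mult_right_mono) (use P0 D0 in auto)
      thus ?thesis using k1 by (simp add: mult.assoc)
    qed
    finally show ?thesis using True k_def by (simp add: fd_def)
  next
    case False
    have k1: "d = 2*k+1" using False k_def by auto
    have pb: "\<bar>prod ?u' {1..k} - prod ?v' {1..k}\<bar> \<le> real (card {1..k}) * (2*P^2) ^ (card {1..k} - 1) * (4*P*D)"
      and pu: "\<bar>prod ?u' {1..k}\<bar> \<le> (2*P^2)^k"
    proof -
      have H: "\<bar>?u' j\<bar> \<le> 2*P^2 \<and> \<bar>?v' j\<bar> \<le> 2*P^2 \<and> \<bar>?u' j - ?v' j\<bar> \<le> 4*P*D" if j: "j \<in> {1..k}" for j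
      proof -
        have h1: "0 \<le> x (2*j+1) \<and> x (2*j+1) \<le> P \<and> 0 \<le> y (2*j+1) \<and> y (2*j+1) \<le> P \<and> \<bar>x (2*j+1) - y (2*j+1)\<bar> \<le> D"
          using j k1 by (intro b) auto
        have h2: "0 \<le> x (2*j) \<and> x (2*j) \<le> P \<and> 0 \<le> y (2*j) \<and> y (2*j) \<le> P \<and> \<bar>x (2*j) - y (2*j)\<bar> \<le> D"
          using j k1 by (intro b) auto
        show ?thesis
          using pair_bound[of "x (2*j)" P "x (2*j+1)" "y (2*j)" D "y (2*j+1)"]
              pair_bound[of "y (2*j)" P "y (2*j+1)" "x (2*j)" D "x (2*j+1)"] h1 h2
          by (auto simp: abs_minus_commute)
      qed
      show "\<bar>prod ?u' {1..k} - prod ?v' {1..k}\<bar> \<le> real (card {1..k}) * (2*P^2) ^ (card {1..k} - 1) * (4*P*D)"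
        by (rule prod_diff_bound) (use H in auto)
      have "(\<Prod>j\<in>{1..k}. \<bar>?u' j\<bar>) \<le> (\<Prod>j\<in>{1..k}. 2*P^2)" by (rule prod_mono) (use H in auto)
      thus "\<bar>prod ?u' {1..k}\<bar> \<le> (2*P^2)^k" by (simp add: abs_prod)
    qed
    have pb': "\<bar>prod ?u' {1..k} - prod ?v' {1..k}\<bar> \<le> real k * (2*P^2) ^ (k - 1) * (4*P*D)"
      using pb by simp
    have x1: "0 \<le> x 1 \<and> x 1 \<le> P \<and> 0 \<le> y 1 \<and> y 1 \<le> P \<and> \<bar>x 1 - y 1\<bar> \<le> D" using b d by auto
    have eq: "x 1 * prod ?u' {1..k} - y 1 * prod ?v' {1..k} = (x 1 - y 1) * prod ?u' {1..k} + y 1 * (prod ?u' {1..k} - prod ?v' {1..k})"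
      by (simp add: algebra_simps)
    have "\<bar>x 1 * prod ?u' {1..k} - y 1 * prod ?v' {1..k}\<bar> = \<bar>(x 1 - y 1) * prod ?u' {1..k} + y 1 * (prod ?u' {1..k} - prod ?v' {1..k})\<bar>"
      by (simp only: eq)
    also have "\<dots> \<le> \<bar>(x 1 - y 1) * prod ?u' {1..k}\<bar> + \<bar>y 1 * (prod ?u' {1..k} - prod ?v' {1..k})\<bar>"
      by (rule abs_triangle_ineq)
    also have "\<dots> = \<bar>x 1 - y 1\<bar> * \<bar>prod ?u' {1..k}\<bar> + \<bar>y 1\<bar> * \<bar>prod ?u' {1..k} - prod ?v' {1..k}\<bar>"
      by (simp only: abs_mult)
    also have "\<dots> \<le> D * (2*P^2)^k + P * (real k * (2*P^2) ^ (k - 1) * (4*P*D))"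
      by (intro add_mono mult_mono pb' pu) (use x1 P0 D0 in auto)
    also have "\<dots> \<le> real d * 2^d * P^(d-1) * D"
    proof (cases k)
      case 0 thus ?thesis using k1 D0 by simp
    next
      case (Suc m)
      have f1: "(2*P^2)^k = 2^k * P^(2*k)" by (simp add: power_mult_distrib power_mult)
      have f2: "(2*P^2)^(k-1) * (4*P*P) = 2^(k+1) * P^(2*k)"
        by (simp add: Suc power_mult_distrib power_mult power2_eq_square)
      have e: "D * (2*P^2)^k + P * (real k * (2*P^2) ^ (k - 1) * (4*P*D)) = (2^k + real k * 2^(k+1)) * P^(2*k) * D"
      proof -
        have "P * (real k * (2*P^2) ^ (k - 1) * (4*P*D)) = real k * D * ((2*P^2)^(k-1) * (4*P*P))"
          by (simp add: algebra_simps)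
        thus ?thesis unfolding f1 by (simp only: f2) (simp add: algebra_simps)
      qed
      have "(2::real)^k + real k * 2^(k+1) \<le> real d * 2^d"
      proof -
        have "(2::real)^k \<le> 2^(k+1)" by simp
        hence "(2::real)^k + real k * 2^(k+1) \<le> (real k + 1) * 2^(k+1)" by (simp add: algebra_simps)
        also have "\<dots> \<le> real d * 2^d" by (intro mult_mono power_increasing) (use k1 in auto)
        finally show ?thesis .
      qed
      hence "(2^k + real k * 2^(k+1)) * (P^(2*k) * D) \<le> real d * 2^d * (P^(2*k) * D)"
        by (rule mult_right_mono) (use P0 D0 in auto)
      thus ?thesis unfolding e using k1 by (simp add: mult.assoc)
    qed
    finally show ?thesis using False k_def by (simp add: fd_def)
  qed
qed

lemma pow_lip:
  fixes a b P D :: real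
  assumes "0 \<le> a" "a \<le> P" "0 \<le> b" "b \<le> P" "\<bar>a - b\<bar> \<le> D"
  shows "\<bar>a^d - b^d\<bar> \<le> real d * P^(d-1) * D"
  using prod_diff_bound[of "{1..d}" "\<lambda>_. a" P "\<lambda>_. b" D] assms by simp



lemma ff_lip:
  fixes x y :: "nat \<Rightarrow> real" and P D :: real
  assumes b: "\<And>i. 1 \<le> i \<Longrightarrow> i \<le> 2*d+1 \<Longrightarrow> 0 \<le> x i \<and> x i \<le> P \<and> 0 \<le> y i \<and> y i \<le> P \<and> \<bar>x i - y i\<bar> \<le> D"
    and d: "d \<ge> 1"
  shows "\<bar>ff d x - ff d y\<bar> \<le> (3 * real d * 2^d) * P^(d-1) * D"
proof -
  have P0: "0 \<le> P" and D0: "0 \<le> D" using b[of 1] d by auto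
  have 1: "\<bar>fd d x - fd d y\<bar> \<le> real d * 2^d * P^(d-1) * D"
    by (rule fd_lip) (use b d in auto)
  have 2: "\<bar>fd d (\<lambda>i. x (d+i)) - fd d (\<lambda>i. y (d+i))\<bar> \<le> real d * 2^d * P^(d-1) * D"
    by (rule fd_lip) (use b d in auto)
  have 3: "\<bar>x (2*d+1)^d - y (2*d+1)^d\<bar> \<le> real d * P^(d-1) * D"
    by (rule pow_lip) (use b[of "2*d+1"] in auto)
  have 4: "real d * P^(d-1) * D \<le> real d * 2^d * P^(d-1) * D"
  proof -
    have "real d * 1 \<le> real d * 2^d" by (intro mult_left_mono) auto
    thus ?thesis using P0 D0 by (intro mult_right_mono) auto
  qed
  show ?thesis unfolding ff_def using 1 2 3 4 by (simp add: algebra_simps) linarith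
qed

lemma fd_hom:
  "(of_int (fd d x) :: 'b::comm_ring_1) = fd d (\<lambda>i. of_int (x i))"
  by (simp add: fd_def of_int_prod)

lemma ff_hom:
  "(of_int (ff d x) :: 'b::comm_ring_1) = ff d (\<lambda>i. of_int (x i))"
  by (simp add: ff_def fd_hom)

lemma ff_cong:
  assumes "\<And>i. 1 \<le> i \<Longrightarrow> i \<le> 2*d+1 \<Longrightarrow> x i = y i"
  shows "ff d x = ff d y"
proof -
  have a: "fd d x = fd d y" unfolding fd_def
    by (intro if_cong refl arg_cong2[where f="(*)"] prod.cong arg_cong2[where f="(+)"]
         arg_cong[where f="\<lambda>t. t^2"]) (use div_le_dividend[of d 2] in \<open>auto intro!: assms\<close>)
  have b: "fd d (\<lambda>i. x (d+i)) = fd d (\<lambda>i. y (d+i))" unfolding fd_def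
    by (intro if_cong refl arg_cong2[where f="(*)"] prod.cong arg_cong2[where f="(+)"]
         arg_cong[where f="\<lambda>t. t^2"]) (use div_le_dividend[of d 2] in \<open>auto intro!: assms\<close>)
  show ?thesis unfolding ff_def a b using assms[of "2*d+1"] by simp
qed

lemma fd_mod:
  fixes x y :: "nat \<Rightarrow> int"
  assumes "\<And>i. 1 \<le> i \<Longrightarrow> i \<le> d \<Longrightarrow> x i mod q = y i mod q"
  shows "fd d x mod q = fd d y mod q"
proof -
  have sq: "(x i ^ 2 + x j ^ 2) mod q = (y i ^ 2 + y j ^ 2) mod q"
    if "1 \<le> i" "i \<le> d" "1 \<le> j" "j \<le> d" for i j
    using assms[OF that(1,2)] assms[OF that(3,4)]
  proof -
    have "(x i mod q)^2 mod q = (y i mod q)^2 mod q" "(x j mod q)^2 mod q = (y j mod q)^2 mod q"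
      using assms[OF that(1,2)] assms[OF that(3,4)] by simp_all
    hence "x i ^ 2 mod q = y i ^ 2 mod q" "x j ^ 2 mod q = y j ^ 2 mod q" by (simp_all add: power_mod)
    thus ?thesis by (intro mod_add_cong)
  qed
  show ?thesis
  proof (cases "even d")
    case True
    have "(\<Prod>i=1..d div 2. x (2*i-1)^2 + x (2*i)^2) mod q = (\<Prod>i=1..d div 2. (x (2*i-1)^2 + x (2*i)^2) mod q) mod q"
      by (simp add: mod_prod_eq)
    also have "\<dots> = (\<Prod>i=1..d div 2. (y (2*i-1)^2 + y (2*i)^2) mod q) mod q"
      by (intro arg_cong2[where f="(mod)"] prod.cong refl sq) auto
    also have "\<dots> = (\<Prod>i=1..d div 2. y (2*i-1)^2 + y (2*i)^2) mod q"
      by (simp add: mod_prod_eq)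
    finally show ?thesis using True by (simp add: fd_def)
  next
    case False
    have hdd: "2*(d div 2)+1 = d" using False by (rule odd_two_times_div_two_succ)
    have hd: "2*x+1 \<le> d" if "x \<le> d div 2" for x using that hdd by linarith
    have "(\<Prod>i=1..d div 2. x (2*i)^2 + x (2*i+1)^2) mod q = (\<Prod>i=1..d div 2. (x (2*i)^2 + x (2*i+1)^2) mod q) mod q"
      by (simp add: mod_prod_eq)
    also have "\<dots> = (\<Prod>i=1..d div 2. (y (2*i)^2 + y (2*i+1)^2) mod q) mod q"
      by (rule arg_cong[where f="\<lambda>t. t mod q"], rule prod.cong[OF refl], rule sq) (use hd in auto)
    also have "\<dots> = (\<Prod>i=1..d div 2. y (2*i)^2 + y (2*i+1)^2) mod q"
      by (simp add: mod_prod_eq)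
    finally have "(\<Prod>i=1..d div 2. x (2*i)^2 + x (2*i+1)^2) mod q = (\<Prod>i=1..d div 2. y (2*i)^2 + y (2*i+1)^2) mod q" .
    moreover have "x 1 mod q = y 1 mod q" using False assms[of 1] by (cases d) auto
    ultimately have "(x 1 * (\<Prod>i=1..d div 2. x (2*i)^2 + x (2*i+1)^2)) mod q = (y 1 * (\<Prod>i=1..d div 2. y (2*i)^2 + y (2*i+1)^2)) mod q"
      by (intro mod_mult_cong)
    thus ?thesis using False by (simp add: fd_def)
  qed
qed

lemma ff_mod:
  fixes x y :: "nat \<Rightarrow> int"
  assumes "\<And>i. 1 \<le> i \<Longrightarrow> i \<le> 2*d+1 \<Longrightarrow> x i mod q = y i mod q"
  shows "ff d x mod q = ff d y mod q"
proof -
  have "fd d x mod q = fd d y mod q" by (rule fd_mod) (use assms in auto)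
  moreover have "fd d (\<lambda>i. x (d+i)) mod q = fd d (\<lambda>i. y (d+i)) mod q" by (rule fd_mod) (use assms in auto)
  moreover have "x (2*d+1)^d mod q = y (2*d+1)^d mod q"
  proof -
    have "x (2*d+1) mod q = y (2*d+1) mod q" using assms[of "2*d+1"] by simp
    hence "(x (2*d+1) mod q)^d mod q = (y (2*d+1) mod q)^d mod q" by simp
    thus ?thesis by (simp add: power_mod)
  qed
  ultimately show ?thesis unfolding ff_def by (intro mod_diff_cong mod_add_cong)
qed



definition cell :: "nat set \<Rightarrow> (nat \<Rightarrow> int) \<Rightarrow> (nat \<Rightarrow> real) set" where
  "cell I x = PiE I (\<lambda>i. if x i = 1 then {0..1} else {real_of_int (x i) - 1 <.. real_of_int (x i)})"

definition Xc :: "nat set \<Rightarrow> (nat \<Rightarrow> real) \<Rightarrow> (nat \<Rightarrow> int)" where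
  "Xc I \<xi> = (\<lambda>i. if i \<in> I then max 1 \<lceil>\<xi> i\<rceil> else undefined)"

lemma Xc_in:
  assumes "\<xi> \<in> PiE I (\<lambda>_. {0..real P})" "P \<ge> 1"
  shows "Xc I \<xi> \<in> PiE I (\<lambda>_. {1..int P})" "\<xi> \<in> cell I (Xc I \<xi>)"
proof -
  have r: "0 \<le> \<xi> i \<and> \<xi> i \<le> real P" if "i \<in> I" for i using assms that by auto
  show "Xc I \<xi> \<in> PiE I (\<lambda>_. {1..int P})"
  proof (rule PiE_I)
    fix i assume i: "i \<in> I"
    have "\<lceil>\<xi> i\<rceil> \<le> int P" using r[OF i] by (simp add: ceiling_le_iff)
    thus "Xc I \<xi> i \<in> {1..int P}" using i assms(2) by (auto simp: Xc_def)
  qed (auto simp: Xc_def)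
  show "\<xi> \<in> cell I (Xc I \<xi>)" unfolding cell_def
  proof (rule PiE_I)
    fix i assume i: "i \<in> I"
    show "\<xi> i \<in> (if Xc I \<xi> i = 1 then {0..1} else {real_of_int (Xc I \<xi> i) - 1 <.. real_of_int (Xc I \<xi> i)})"
    proof (cases "\<lceil>\<xi> i\<rceil> \<le> 1")
      case True
      hence "\<xi> i \<le> 1" by (simp add: ceiling_le_iff)
      moreover have "Xc I \<xi> i = 1" using True i unfolding Xc_def by (simp add: max_absorb1)
      ultimately show ?thesis using r[OF i] by simp
    next
      case False
      hence "Xc I \<xi> i = \<lceil>\<xi> i\<rceil>" using i by (auto simp: Xc_def max_def)
      thus ?thesis using False by (auto simp: ceiling_correct) linarith+
    qed
  next
    fix i assume "i \<notin> I" thus "\<xi> i = undefined" using assms(1) by auto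
  qed
qed

lemma Xc_unique:
  assumes "x \<in> PiE I (\<lambda>_. {1..int P})" "\<xi> \<in> cell I x"
  shows "x = Xc I \<xi>"
proof
  fix i show "x i = Xc I \<xi> i"
  proof (cases "i \<in> I")
    case True
    have xi: "1 \<le> x i" using assms(1) True by auto
    have c: "\<xi> i \<in> (if x i = 1 then {0..1} else {real_of_int (x i) - 1 <.. real_of_int (x i)})"
      using PiE_mem[OF assms(2)[unfolded cell_def] True] by simp
    show ?thesis
    proof (cases "x i = 1")
      case True': True
      hence "\<lceil>\<xi> i\<rceil> \<le> 1" using c by (simp add: ceiling_le_iff)
      thus ?thesis using True True' unfolding Xc_def by (simp add: max_absorb1)
    next
      case False
      hence "\<lceil>\<xi> i\<rceil> = x i" using c by (intro ceiling_unique) auto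
      thus ?thesis using True False xi by (auto simp: Xc_def max_def)
    qed
  next
    case False thus ?thesis using assms(1) by (auto simp: Xc_def)
  qed
qed

lemma cell_sub: assumes "x \<in> PiE I (\<lambda>_. {1..int P})" shows "cell I x \<subseteq> PiE I (\<lambda>_. {0..real P})"
proof
  fix \<xi> assume a: "\<xi> \<in> cell I x"
  show "\<xi> \<in> PiE I (\<lambda>_. {0..real P})"
  proof (rule PiE_I)
    fix i assume i: "i \<in> I"
    have c: "\<xi> i \<in> (if x i = 1 then {0..1} else {real_of_int (x i) - 1 <.. real_of_int (x i)})"
      using PiE_mem[OF a[unfolded cell_def] i] by simp
    have "1 \<le> x i" "x i \<le> int P" using assms i by auto
    hence "1 \<le> real_of_int (x i)" "real_of_int (x i) \<le> real P" by linarith+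
    thus "\<xi> i \<in> {0..real P}" using c by (auto split: if_splits)
  next
    fix i assume "i \<notin> I" thus "\<xi> i = undefined" using a by (auto simp: cell_def)
  qed
qed

lemma emeasure_cell:
  assumes "finite I"
  shows "cell I x \<in> sets (PiM I (\<lambda>_. lborel))" "emeasure (PiM I (\<lambda>_. lborel)) (cell I x) = 1"
proof -
  interpret product_sigma_finite "\<lambda>_::nat. lborel" by standard
  show "cell I x \<in> sets (PiM I (\<lambda>_. lborel))" unfolding cell_def
    by (rule sets_PiM_I_finite) (use assms in auto)
  have "emeasure (PiM I (\<lambda>_. lborel)) (cell I x) =
    (\<Prod>i\<in>I. emeasure lborel (if x i = 1 then {0..1} else {real_of_int (x i) - 1 <.. real_of_int (x i)}))"
    unfolding cell_def by (rule emeasure_PiM) (use assms in auto)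
  also have "\<dots> = (\<Prod>i\<in>I. 1)" by (intro prod.cong) auto
  finally show "emeasure (PiM I (\<lambda>_. lborel)) (cell I x) = 1" by simp
qed

lemma emeasure_box:
  fixes I :: "nat set"
  assumes "finite I"
  shows "PiE I (\<lambda>_. {0..real P}) \<in> sets (PiM I (\<lambda>_. lborel))"
    "emeasure (PiM I (\<lambda>_. lborel)) (PiE I (\<lambda>_. {0..real P})) = ennreal (real P ^ card I)"
proof -
  interpret product_sigma_finite "\<lambda>_::nat. lborel" by standard
  show "PiE I (\<lambda>_. {0..real P}) \<in> sets (PiM I (\<lambda>_. lborel))"
    by (rule sets_PiM_I_finite) (use assms in auto)
  have "emeasure (PiM I (\<lambda>_. lborel)) (PiE I (\<lambda>_. {0..real P})) = (\<Prod>i\<in>I. emeasure lborel {0..real P})"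
    by (subst emeasure_PiM) (use assms in auto)
  also have "\<dots> = (\<Prod>i\<in>I. ennreal (real P))" by simp
  also have "\<dots> = ennreal (real P ^ card I)" by (simp add: ennreal_power)
  finally show "emeasure (PiM I (\<lambda>_. lborel)) (PiE I (\<lambda>_. {0..real P})) = ennreal (real P ^ card I)" .
qed



lemma riemann_cmp:
  fixes I :: "nat set" and g :: "(nat \<Rightarrow> real) \<Rightarrow> complex" and v :: "(nat \<Rightarrow> int) \<Rightarrow> complex"
  assumes fin: "finite I" and P: "P \<ge> 1"
   and gm: "g \<in> borel_measurable (PiM I (\<lambda>_. lborel))"
   and gb: "\<And>\<xi>. norm (g \<xi>) \<le> 1"
   and approx: "\<And>x \<xi>. x \<in> PiE I (\<lambda>_. {1..int P}) \<Longrightarrow> \<xi> \<in> cell I x \<Longrightarrow> norm (g \<xi> - v x) \<le> \<epsilon>"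
  shows "norm ((LINT \<xi>:PiE I (\<lambda>_. {0..real P})|PiM I (\<lambda>_. lborel). g \<xi>) - (\<Sum>x\<in>PiE I (\<lambda>_. {1..int P}). v x))
           \<le> real P ^ card I * \<epsilon>"
proof -
  define M where "M = PiM I (\<lambda>_::nat. (lborel :: real measure))"
  define D where "D = PiE I (\<lambda>_::nat. {0..real P})"
  define B where "B = PiE I (\<lambda>_::nat. {1..int P})"
  have Dset: "D \<in> sets M" and emD: "emeasure M D = ennreal (real P ^ card I)"
    using emeasure_box[OF fin, of P] by (simp_all add: M_def D_def)
  have mD: "measure M D = real P ^ card I" using emD by (simp add: measure_def)
  have finB: "finite B" unfolding B_def using fin by (intro finite_PiE) auto
  have cset: "cell I x \<in> sets M" and cem: "emeasure M (cell I x) = 1" for x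
    using emeasure_cell[OF fin, of x] by (simp_all add: M_def)
  have cmeas: "measure M (cell I x) = 1" for x using cem[of x] by (simp add: measure_def)
  define s where "s \<xi> = (\<Sum>x\<in>B. indicator (cell I x) \<xi> *\<^sub>R v x)" for \<xi>
  have int_ind: "integrable M (indicator D :: _ \<Rightarrow> real)"
    using Dset emD sets.sets_into_space[OF Dset] by (simp add: integrable_indicator_iff Int_absorb2)
  have int_g: "integrable M (\<lambda>\<xi>. indicator D \<xi> *\<^sub>R g \<xi>)"
  proof (rule Bochner_Integration.integrable_bound[OF int_ind])
    show "(\<lambda>\<xi>. indicator D \<xi> *\<^sub>R g \<xi>) \<in> borel_measurable M"
      using gm Dset unfolding M_def by (intro borel_measurable_scaleR borel_measurable_indicator) auto
    show "AE \<xi> in M. norm (indicator D \<xi> *\<^sub>R g \<xi>) \<le> norm (indicator D \<xi> :: real)"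
      using gb by (intro AE_I2) (auto simp: indicator_def)
  qed
  have int_s: "integrable M s" unfolding s_def
    using cset cem by (intro Bochner_Integration.integrable_sum Bochner_Integration.integrable_indicator) auto
  have s_zero: "s \<xi> = 0" if "\<xi> \<notin> D" for \<xi>
  proof -
    have "indicator (cell I x) \<xi> = (0::real)" if "x \<in> B" for x
      using cell_sub[of x I P] \<open>x \<in> B\<close> \<open>\<xi> \<notin> D\<close> by (auto simp: B_def D_def indicator_def)
    thus ?thesis unfolding s_def by simp
  qed
  have s_val: "s \<xi> = v (Xc I \<xi>)" if "\<xi> \<in> D" for \<xi>
  proof -
    have xD: "\<xi> \<in> PiE I (\<lambda>_. {0..real P})" using that by (simp add: D_def)
    have XB: "Xc I \<xi> \<in> B" using Xc_in(1)[OF xD P] by (simp add: B_def)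
    have Xcell: "\<xi> \<in> cell I (Xc I \<xi>)" using Xc_in(2)[OF xD P] .
    have "s \<xi> = (\<Sum>x\<in>B. if x = Xc I \<xi> then v x else 0)" unfolding s_def
    proof (rule sum.cong[OF refl])
      fix x assume xB: "x \<in> B"
      show "indicator (cell I x) \<xi> *\<^sub>R v x = (if x = Xc I \<xi> then v x else 0)"
      proof (cases "x = Xc I \<xi>")
        case True thus ?thesis using Xcell by simp
      next
        case False
        have "\<xi> \<notin> cell I x"
        proof
          assume "\<xi> \<in> cell I x"
          hence "x = Xc I \<xi>" using xB by (intro Xc_unique[where P=P]) (simp_all add: B_def)
          thus False using False by simp
        qed
        thus ?thesis using False by simp
      qed
    qed
    also have "\<dots> = v (Xc I \<xi>)" using finB XB by simp
    finally show ?thesis .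
  qed
  have ints: "integral\<^sup>L M s = (\<Sum>x\<in>B. v x)"
  proof -
    have "integral\<^sup>L M s = (\<Sum>x\<in>B. integral\<^sup>L M (\<lambda>\<xi>. indicator (cell I x) \<xi> *\<^sub>R v x))"
      unfolding s_def using cset cem by (intro Bochner_Integration.integral_sum Bochner_Integration.integrable_indicator) auto
    also have "\<dots> = (\<Sum>x\<in>B. v x)"
    proof (rule sum.cong[OF refl])
      fix x
      have "integral\<^sup>L M (\<lambda>\<xi>. indicator (cell I x) \<xi> *\<^sub>R v x) = integral\<^sup>L M (indicator (cell I x)) *\<^sub>R v x"
        using cset[of x] cem[of x] sets.sets_into_space[OF cset[of x]]
        by (intro integral_scaleR_left) (simp add: integrable_indicator_iff Int_absorb2)
      also have "\<dots> = v x" using sets.sets_into_space[OF cset[of x]] cmeas[of x]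
        by (simp add: Int_absorb2)
      finally show "integral\<^sup>L M (\<lambda>\<xi>. indicator (cell I x) \<xi> *\<^sub>R v x) = v x" .
    qed
    finally show ?thesis .
  qed
  have ptw: "norm (indicator D \<xi> *\<^sub>R g \<xi> - s \<xi>) \<le> indicator D \<xi> * \<epsilon>" for \<xi>
  proof (cases "\<xi> \<in> D")
    case True
    have xD: "\<xi> \<in> PiE I (\<lambda>_. {0..real P})" using True by (simp add: D_def)
    have "Xc I \<xi> \<in> B" "\<xi> \<in> cell I (Xc I \<xi>)" using Xc_in[OF xD P] by (simp_all add: B_def)
    thus ?thesis using True s_val[OF True] approx[of "Xc I \<xi>" \<xi>] by (simp add: B_def)
  next
    case False thus ?thesis using s_zero by simp
  qed
  have "norm (integral\<^sup>L M (\<lambda>\<xi>. indicator D \<xi> *\<^sub>R g \<xi>) - integral\<^sup>L M s)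
      = norm (integral\<^sup>L M (\<lambda>\<xi>. indicator D \<xi> *\<^sub>R g \<xi> - s \<xi>))"
    using int_g int_s by simp
  also have "\<dots> \<le> integral\<^sup>L M (\<lambda>\<xi>. norm (indicator D \<xi> *\<^sub>R g \<xi> - s \<xi>))"
    by (rule integral_norm_bound)
  also have "\<dots> \<le> integral\<^sup>L M (\<lambda>\<xi>. indicator D \<xi> * \<epsilon>)"
    using int_g int_s int_ind ptw by (intro integral_mono) auto
  also have "\<dots> = measure M D * \<epsilon>"
    using int_ind sets.sets_into_space[OF Dset] by (simp add: Int_absorb2)
  finally show ?thesis
    unfolding set_lebesgue_integral_def ints mD[symmetric]
    by (simp add: M_def D_def B_def)
qed



lemma w_periodic:
  fixes x z :: "nat \<Rightarrow> int" and q a :: nat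
  assumes "q \<ge> 1" "\<And>i. 1 \<le> i \<Longrightarrow> i \<le> 2*d+1 \<Longrightarrow> x i mod int q = z i mod int q"
  shows "ee (real a / real q * of_int (ff d x)) = ee (real a / real q * of_int (ff d z))"
proof -
  have "ff d x mod int q = ff d z mod int q" by (rule ff_mod) (use assms in auto)
  then obtain k where k: "ff d x = ff d z + int q * k"
    by (metis mod_eqE mult.commute add.commute eq_diff_eq dvd_def)
  have e: "real a / real q * of_int (ff d x) = real a / real q * of_int (ff d z) + of_int (int a * k)"
    using assms(1) by (simp add: k algebra_simps)
  show ?thesis by (simp only: e ee_add ee_int mult_1_right)
qed

lemma card_cube: "finite I \<Longrightarrow> card (PiE I (\<lambda>_. {1..int m})) = m ^ card I"
  by (simp add: card_PiE)

lemma SS_bound: "norm (SS d q a) \<le> real q ^ (2*d+1)"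
proof -
  have "norm (SS d q a) \<le> (\<Sum>z\<in>PiE {1..2*d+1} (\<lambda>_. {1..int q}). norm (ee (real a / real q * of_int (ff d z))))"
    unfolding SS_def by (rule norm_sum)
  also have "\<dots> = real (card (PiE {1..2*d+1} (\<lambda>_. {1..int q})))" by simp
  also have "\<dots> = real q ^ (2*d+1)" by (simp add: card_cube)
  finally show ?thesis .
qed



lemma divmod_aux:
  fixes q b r :: int
  assumes "0 \<le> r" "r < q"
  shows "(q*b + r) div q = b" "(q*b + r) mod q = r"
  using assms by (simp_all add: add.commute)

lemma block_zero:
  fixes d q m a :: nat and \<beta> :: real
  assumes q1: "q \<ge> 1"
  shows "(\<Sum>x\<in>PiE {1..2*d+1} (\<lambda>_. {1..int (q*m)}).
      (ee (real a / real q * of_int (ff d x)) - SS d q a / of_nat q ^ (2*d+1))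
        * ee (\<beta> * ff d (\<lambda>i. real_of_int (int q * ((x i - 1) div int q))))) = 0"
proof -
  define I where "I = {1..2*d+1}"
  define w where "w x = ee (real a / real q * of_int (ff d x))" for x
  define avg where "avg = SS d q a / of_nat q ^ (2*d+1)"
  define Gb where "Gb b = ee (\<beta> * ff d (\<lambda>i. real_of_int (int q * b i)))" for b :: "nat \<Rightarrow> int"
  define Bl where "Bl = PiE I (\<lambda>_. {0..int m - 1})"
  define Res where "Res = PiE I (\<lambda>_. {1..int q})"
  define B' where "B' = PiE I (\<lambda>_. {1..int (q*m)})"
  define comb where "comb p = (\<lambda>i. if i\<in>I then int q * fst p i + snd p i else undefined)" for p :: "(nat \<Rightarrow> int) \<times> (nat \<Rightarrow> int)"
  define spl where "spl x = ((\<lambda>i. if i\<in>I then (x i - 1) div int q else undefined),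
                            (\<lambda>i. if i\<in>I then (x i - 1) mod int q + 1 else undefined))" for x :: "nat \<Rightarrow> int"
  define h where "h x = (w x - avg) * ee (\<beta> * ff d (\<lambda>i. real_of_int (int q * ((x i - 1) div int q))))" for x
  define g where "g p = (w (snd p) - avg) * Gb (fst p)" for p :: "(nat \<Rightarrow> int) \<times> (nat \<Rightarrow> int)"
  have q0: "int q > 0" using q1 by simp
  have dm: "(int q * b + (z - 1)) div int q = b" "(int q * b + (z - 1)) mod int q = z - 1"
    if "1 \<le> z" "z \<le> int q" for b z
    using divmod_aux[of "z - 1" "int q" b] that by auto
  have "sum g (Bl \<times> Res) = sum h B'"
  proof (rule sum.reindex_bij_witness[where i=spl and j=comb])
    fix p assume p: "p \<in> Bl \<times> Res"
    obtain b z where bz: "p = (b, z)" by (cases p)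
    have bi: "b \<in> Bl" and zi: "z \<in> Res" using p bz by auto
    have zr: "1 \<le> z i \<and> z i \<le> int q" if "i \<in> I" for i using zi that by (auto simp: Res_def)
    have br: "0 \<le> b i \<and> b i \<le> int m - 1" if "i \<in> I" for i using bi that by (auto simp: Bl_def)
    have cv: "int q * b i + z i - 1 = int q * b i + (z i - 1)" for i by simp
    show "spl (comb p) = p"
    proof -
      have "(\<lambda>i. if i\<in>I then (comb p i - 1) div int q else undefined) = b"
      proof
        fix i show "(if i\<in>I then (comb p i - 1) div int q else undefined) = b i"
          using bi dm(1)[of "z i" "b i"] zr[of i] by (auto simp: comb_def bz Bl_def cv)
      qed
      moreover have "(\<lambda>i. if i\<in>I then (comb p i - 1) mod int q + 1 else undefined) = z"
      proof
        fix i show "(if i\<in>I then (comb p i - 1) mod int q + 1 else undefined) = z i"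
          using zi dm(2)[of "z i" "b i"] zr[of i] by (auto simp: comb_def bz Res_def cv)
      qed
      ultimately show ?thesis unfolding spl_def by (simp only:) (simp add: bz)
    qed
    show "comb p \<in> B'" unfolding B'_def
    proof (rule PiE_I)
      fix i assume i: "i \<in> I"
      have c0: "int q * b i \<le> int q * (int m - 1)" using br[OF i] q0 by (intro mult_left_mono) auto
      have c1: "int q * b i \<le> int q * int m - int q" using c0 by (simp add: right_diff_distrib)
      have c2: "0 \<le> int q * b i" using br[OF i] q0 by simp
      have z1: "1 \<le> z i" "z i \<le> int q" using zr[OF i] by auto
      have "1 \<le> int q * b i + z i" "int q * b i + z i \<le> int q * int m"
        using c1 c2 z1 by linarith+
      thus "comb p i \<in> {1..int (q*m)}" using i by (simp add: comb_def bz)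
    qed (auto simp: comb_def)
    show "h (comb p) = g p"
    proof -
      have "w (comb p) = w z" unfolding w_def
        by (rule w_periodic[OF q1]) (auto simp: comb_def bz I_def)
      moreover have "ff d (\<lambda>i. real_of_int (int q * ((comb p i - 1) div int q))) = ff d (\<lambda>i. real_of_int (int q * b i))"
      proof (rule ff_cong)
        fix i assume "1 \<le> i" "i \<le> 2*d+1"
        hence i: "i \<in> I" by (simp add: I_def)
        show "real_of_int (int q * ((comb p i - 1) div int q)) = real_of_int (int q * b i)"
          using dm(1)[of "z i" "b i"] zr[OF i] i by (simp add: comb_def bz cv)
      qed
      ultimately show ?thesis by (simp add: h_def g_def Gb_def bz)
    qed
  next
    fix x assume x: "x \<in> B'"
    have xr: "1 \<le> x i \<and> x i \<le> int q * int m" if "i \<in> I" for i using x that by (auto simp: B'_def)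
    show "comb (spl x) = x"
    proof
      fix i show "comb (spl x) i = x i"
      proof (cases "i \<in> I")
        case True thus ?thesis
          using div_mult_mod_eq[of "x i - 1" "int q"] by (simp add: comb_def spl_def algebra_simps)
      next
        case False thus ?thesis using x by (auto simp: comb_def B'_def)
      qed
    qed
    show "spl x \<in> Bl \<times> Res"
    proof -
      have "fst (spl x) \<in> Bl" unfolding Bl_def
      proof (rule PiE_I)
        fix i assume i: "i \<in> I"
        have m1: "int q * ((x i - 1) div int q) \<le> x i - 1"
        proof -
          have e: "int q * ((x i - 1) div int q) + (x i - 1) mod int q = x i - 1"
            using div_mult_mod_eq[of "x i - 1" "int q"] by (simp add: mult.commute)
          show ?thesis using e pos_mod_sign[OF q0, of "x i - 1"] by linarith
        qed
        have "int q * ((x i - 1) div int q) < int q * int m" using m1 xr[OF i] by linarith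
        hence "(x i - 1) div int q < int m" using q0 by (simp add: mult_less_cancel_left_pos)
        moreover have "0 \<le> (x i - 1) div int q" using xr[OF i] q0 by (simp add: pos_imp_zdiv_nonneg_iff)
        ultimately show "fst (spl x) i \<in> {0..int m - 1}" using i by (simp add: spl_def)
      qed (simp add: spl_def)
      moreover have "snd (spl x) \<in> Res" unfolding Res_def
      proof (rule PiE_I)
        fix i assume i: "i \<in> I"
        show "snd (spl x) i \<in> {1..int q}" using i pos_mod_sign[OF q0, of "x i - 1"] pos_mod_bound[OF q0, of "x i - 1"]
          by (simp add: spl_def)
      qed (simp add: spl_def)
      ultimately show ?thesis by (simp add: mem_Times_iff)
    qed
  qed
  also have "sum g (Bl \<times> Res) = (\<Sum>b\<in>Bl. Gb b * (\<Sum>z\<in>Res. (w z - avg)))"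
  proof -
    have "sum g (Bl \<times> Res) = (\<Sum>b\<in>Bl. \<Sum>z\<in>Res. Gb b * (w z - avg))"
      by (simp add: sum.cartesian_product g_def case_prod_beta mult.commute)
    thus ?thesis by (simp add: sum_distrib_left)
  qed
  also have "(\<Sum>z\<in>Res. (w z - avg)) = 0"
  proof -
    have fin: "finite I" by (simp add: I_def)
    have "(\<Sum>z\<in>Res. (w z - avg)) = SS d q a - of_nat (card Res) * avg"
      by (simp add: sum_subtractf SS_def w_def Res_def I_def)
    also have "card Res = q ^ (2*d+1)" using card_cube[OF fin, of q] by (simp add: Res_def I_def)
    finally show ?thesis using q1 by (simp add: avg_def)
  qed
  finally show ?thesis by (simp add: h_def B'_def I_def w_def avg_def)
qed



lemma comp_meas: "(\<lambda>\<xi>::nat\<Rightarrow>real. \<xi> i) \<in> borel_measurable (PiM I (\<lambda>_. lborel))"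
proof (cases "i \<in> I")
  case True
  hence "(\<lambda>\<xi>::nat\<Rightarrow>real. \<xi> i) \<in> measurable (PiM I (\<lambda>_. lborel)) lborel"
    by (rule measurable_component_singleton)
  thus ?thesis by simp
next
  case False
  have "(\<lambda>\<xi>::nat\<Rightarrow>real. undefined) \<in> borel_measurable (PiM I (\<lambda>_. lborel))" by simp
  thus ?thesis
    by (rule measurable_cong[THEN iffD1, rotated]) (use False in \<open>auto simp: space_PiM PiE_def extensional_def\<close>)
qed

lemma fd_meas: "(\<lambda>\<xi>::nat\<Rightarrow>real. fd d (\<lambda>i. \<xi> (k+i))) \<in> borel_measurable (PiM I (\<lambda>_. lborel))"
proof (cases "even d")
  case True thus ?thesis unfolding fd_def
    by simp (intro borel_measurable_add borel_measurable_times borel_measurable_power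
        borel_measurable_prod comp_meas)
next
  case False thus ?thesis unfolding fd_def
    by simp (intro borel_measurable_add borel_measurable_times borel_measurable_power
        borel_measurable_prod comp_meas)
qed

lemma ff_meas: "(\<lambda>\<xi>::nat\<Rightarrow>real. ff d \<xi>) \<in> borel_measurable (PiM I (\<lambda>_. lborel))"
proof -
  have "(\<lambda>\<xi>::nat\<Rightarrow>real. fd d (\<lambda>i. \<xi> (0+i)) + fd d (\<lambda>i. \<xi> (d+i)) - \<xi> (2*d+1) ^ d) \<in> borel_measurable (PiM I (\<lambda>_. lborel))"
    by (intro borel_measurable_add borel_measurable_diff borel_measurable_power fd_meas comp_meas)
  thus ?thesis unfolding ff_def by simp
qed

lemma ee_cont: "continuous_on UNIV ee"
  unfolding ee_def by (intro continuous_intros)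

lemma G_meas: "(\<lambda>\<xi>::nat\<Rightarrow>real. ee (\<beta> * ff d \<xi>)) \<in> borel_measurable (PiM I (\<lambda>_. lborel))"
  by (intro borel_measurable_continuous_on[OF ee_cont] borel_measurable_times borel_measurable_const ff_meas)



lemma final_arith1:
  fixes P :: nat and \<beta> \<delta> L :: real and q d :: nat
  assumes P: "P \<ge> 1" and b: "\<bar>\<beta>\<bar> \<le> real P powr (\<delta> - real d)" and q: "real q \<le> real P powr \<delta>"
    and d: "d \<ge> 1" and L: "L \<ge> 0"
  shows "real P ^ (2*d+1) * (2*pi*\<bar>\<beta>\<bar> * L * real P ^ (d-1) * real q) \<le> 2*pi*L * real P powr (2*real d + 2*\<delta>)"
proof -
  have P0: "real P > 0" using P by simp
  have "\<bar>\<beta>\<bar> * real q \<le> real P powr (\<delta> - real d) * real P powr \<delta>"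
    by (intro mult_mono b q) auto
  also have "\<dots> = real P powr (2*\<delta> - real d)" by (simp add: powr_add[symmetric])
  finally have bq: "\<bar>\<beta>\<bar> * real q \<le> real P powr (2*\<delta> - real d)" .
  have pp: "real P ^ (2*d+1) * real P ^ (d-1) = real P powr (3 * real d)"
  proof -
    have e: "2*d+1 + (d-1) = 3*d" using d by simp
    have "real P ^ (2*d+1) * real P ^ (d-1) = real P ^ (2*d+1 + (d-1))" by (simp only: power_add)
    also have "\<dots> = real P ^ (3*d)" by (simp only: e)
    finally have "real P ^ (2*d+1) * real P ^ (d-1) = real P ^ (3*d)" .
    also have "\<dots> = real P powr (3 * real d)" using P0 powr_realpow[of "real P" "3*d"] by simp
    finally show ?thesis .
  qed
  have "real P ^ (2*d+1) * (2*pi*\<bar>\<beta>\<bar> * L * real P ^ (d-1) * real q) = 2*pi*L * (real P ^ (2*d+1) * real P ^ (d-1)) * (\<bar>\<beta>\<bar> * real q)"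
    by (simp add: algebra_simps)
  also have "\<dots> \<le> 2*pi*L * real P powr (3 * real d) * real P powr (2*\<delta> - real d)"
    unfolding pp by (intro mult_left_mono bq) (use L in auto)
  also have "\<dots> = 2*pi*L * real P powr (2*real d + 2*\<delta>)"
    by (simp add: mult.assoc powr_add[symmetric])
  finally show ?thesis .
qed

lemma final_arith2:
  fixes P :: nat and \<delta> :: real and q d n :: nat
  assumes P: "P \<ge> 1" and q: "real q \<le> real P powr \<delta>" and \<delta>: "\<delta> > 0"
  shows "2 * real n * real q * real P ^ (2*d) \<le> 2 * real n * real P powr (2*real d + 2*\<delta>)"
proof -
  have P0: "real P > 0" using P by simp
  have "real q * real P ^ (2*d) \<le> real P powr \<delta> * real P powr (2 * real d)"
    using q P0 by (intro mult_mono) (auto simp: powr_realpow[symmetric])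
  also have "\<dots> = real P powr (2*real d + \<delta>)" by (simp add: powr_add[symmetric] add.commute)
  also have "\<dots> \<le> real P powr (2*real d + 2*\<delta>)" using P \<delta> by (intro powr_mono) auto
  finally have "real q * real P ^ (2*d) \<le> real P powr (2*real d + 2*\<delta>)" .
  hence "(2 * real n) * (real q * real P ^ (2*d)) \<le> (2 * real n) * real P powr (2*real d + 2*\<delta>)"
    by (rule mult_left_mono) simp
  thus ?thesis by (simp add: mult.assoc)
qed



lemma tri3:
  fixes X Y a Z :: complex
  assumes "norm X \<le> e1" "norm Y \<le> e2" "norm a \<le> 1" "norm Z \<le> e3"
  shows "norm (X + Y - a * Z) \<le> e1 + e2 + 1 * e3"
proof -
  have t1: "norm (X + Y - a*Z) \<le> norm (X+Y) + norm (a*Z)" by (rule norm_triangle_ineq4)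
  have t2: "norm (X+Y) \<le> norm X + norm Y" by (rule norm_triangle_ineq)
  have t3: "norm (a*Z) = norm a * norm Z" by (rule norm_mult)
  have t4: "norm a * norm Z \<le> 1 * e3" by (rule mult_mono) (use assms in auto)
  show ?thesis using t1 t2 t3 t4 assms(1,2) by linarith
qed

lemma main_bound:
  fixes d P q a :: nat and \<alpha> \<delta> :: real
  assumes d: "d \<ge> 1" and P: "P \<ge> 1" and q1: "q \<ge> 1" and qP: "real q \<le> real P powr \<delta>" and \<delta>: "\<delta> > 0"
    and \<alpha>m: "\<alpha> \<in> major_arc d \<delta> P q a"
  shows "cmod (FF d P \<alpha> - complex_of_real (1 / real q ^ (2*d+1)) * SS d q a * II d P (\<alpha> - real a / real q))
          \<le> (4*pi*(3*real d*2^d) + 2*real(2*d+1)) * real P powr (2*real d + 2*\<delta>)"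
proof -
  define n where "n = 2*d+1"
  define I where "I = {1..n}"
  define B where "B = PiE I (\<lambda>_. {1..int P})"
  define \<beta> where "\<beta> = \<alpha> - real a / real q"
  define L where "L = 3 * real d * 2^d"
  define w where "w x = ee (real a / real q * of_int (ff d x))" for x :: "nat \<Rightarrow> int"
  define G where "G \<xi> = ee (\<beta> * ff d \<xi>)" for \<xi> :: "nat \<Rightarrow> real"
  define cv where "cv x = (\<lambda>i. real_of_int (int q * ((x i - 1) div int q)))" for x :: "nat \<Rightarrow> int"
  define avg where "avg = SS d q a / of_nat q ^ n"
  define \<epsilon> where "\<epsilon> = 2*pi*\<bar>\<beta>\<bar> * L * real P ^ (d-1) * real q"
  have \<beta>b: "\<bar>\<beta>\<bar> \<le> real P powr (\<delta> - real d)" using \<alpha>m by (simp add: major_arc_def \<beta>_def)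
  have finI: "finite I" by (simp add: I_def)
  have cardI: "card I = n" by (simp add: I_def)
  have finB: "finite B" unfolding B_def by (intro finite_PiE finI) auto
  have cardB: "card B = P ^ n" using card_cube[OF finI, of P] by (simp add: B_def cardI)
  have L0: "L \<ge> 0" by (simp add: L_def)
  have q0: "int q > 0" using q1 by simp
  have navg: "norm avg \<le> 1"
  proof -
    have "norm avg = norm (SS d q a) / real q ^ n" by (simp add: avg_def norm_divide norm_power)
    also have "\<dots> \<le> real q ^ n / real q ^ n"
      using SS_bound[of d q a] q1 by (intro divide_right_mono) (auto simp: n_def)
    also have "\<dots> = 1" using q1 by simp
    finally show ?thesis .
  qed
  have FFe: "FF d P \<alpha> = (\<Sum>x\<in>B. w x * G (\<lambda>i. real_of_int (x i)))"
    unfolding FF_def B_def I_def n_def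
  proof (rule sum.cong[OF refl])
    fix x :: "nat \<Rightarrow> int"
    have h: "(of_int (ff d x) :: real) = ff d (\<lambda>i. of_int (x i))" by (rule ff_hom)
    have "\<alpha> * real_of_int (ff d x) = real a / real q * real_of_int (ff d x) + \<beta> * ff d (\<lambda>i. real_of_int (x i))"
      by (simp add: h[symmetric] \<beta>_def algebra_simps)
    thus "ee (\<alpha> * of_int (ff d x)) = w x * G (\<lambda>i. real_of_int (x i))"
      by (simp add: w_def G_def ee_add)
  qed
  have lip: "norm (G \<xi> - G (cv x)) \<le> \<epsilon>"
    if xB: "x \<in> B" and xi: "\<And>i. i\<in>I \<Longrightarrow> real_of_int (x i) - 1 \<le> \<xi> i \<and> \<xi> i \<le> real_of_int (x i)" for x \<xi>
  proof -
    have bd: "0 \<le> \<xi> i \<and> \<xi> i \<le> real P \<and> 0 \<le> cv x i \<and> cv x i \<le> real P \<and> \<bar>\<xi> i - cv x i\<bar> \<le> real q"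
      if "1 \<le> i" "i \<le> 2*d+1" for i
    proof -
      have i: "i \<in> I" using that by (simp add: I_def n_def)
      have xr: "1 \<le> x i" "x i \<le> int P" using xB i by (auto simp: B_def)
      define k where "k = (x i - 1) div int q"
      define r where "r = (x i - 1) mod int q"
      have e: "int q * k + r = x i - 1" unfolding k_def r_def using div_mult_mod_eq[of "x i - 1" "int q"] by (simp add: mult.commute)
      have r0: "0 \<le> r" "r \<le> int q - 1" unfolding r_def using pos_mod_sign[OF q0] pos_mod_bound[OF q0] by auto
      have k0: "0 \<le> k" unfolding k_def using xr q0 by (simp add: pos_imp_zdiv_nonneg_iff)
      have qk0: "0 \<le> int q * k" using k0 by simp
      have eR: "real_of_int (int q * k) + real_of_int r = real_of_int (x i) - 1"
        using arg_cong[OF e, of real_of_int] by simp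
      have rR: "0 \<le> real_of_int r" "real_of_int r \<le> real q - 1" using r0 by linarith+
      have qkR: "0 \<le> real_of_int (int q * k)" using qk0 by linarith
      have xrR: "1 \<le> real_of_int (x i)" "real_of_int (x i) \<le> real P" using xr by linarith+
      have cvx: "cv x i = real_of_int (int q * k)" by (simp add: cv_def k_def)
      show ?thesis using xi[OF i] eR rR qkR xrR unfolding cvx by auto
    qed
    have fl: "\<bar>ff d \<xi> - ff d (cv x)\<bar> \<le> L * real P ^ (d-1) * real q"
      unfolding L_def by (rule ff_lip[OF _ d]) (use bd in auto)
    have "norm (G \<xi> - G (cv x)) \<le> 2*pi*\<bar>\<beta> * ff d \<xi> - \<beta> * ff d (cv x)\<bar>"
      unfolding G_def by (rule ee_lip)
    also have "\<dots> = 2*pi*\<bar>\<beta>\<bar> * \<bar>ff d \<xi> - ff d (cv x)\<bar>"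
      by (simp add: right_diff_distrib[symmetric] abs_mult)
    also have "\<dots> \<le> 2*pi*\<bar>\<beta>\<bar> * (L * real P ^ (d-1) * real q)"
      by (intro mult_left_mono fl) auto
    also have "\<dots> = \<epsilon>" by (simp add: \<epsilon>_def algebra_simps)
    finally show ?thesis .
  qed
  have E1: "norm (\<Sum>x\<in>B. w x * (G (\<lambda>i. real_of_int (x i)) - G (cv x))) \<le> real P ^ n * \<epsilon>"
  proof -
    have "norm (\<Sum>x\<in>B. w x * (G (\<lambda>i. real_of_int (x i)) - G (cv x))) \<le> (\<Sum>x\<in>B. \<epsilon>)"
    proof (rule sum_norm_le)
      fix x assume x: "x \<in> B"
      have "norm (G (\<lambda>i. real_of_int (x i)) - G (cv x)) \<le> \<epsilon>" by (rule lip[OF x]) auto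
      thus "norm (w x * (G (\<lambda>i. real_of_int (x i)) - G (cv x))) \<le> \<epsilon>"
        by (simp add: norm_mult w_def)
    qed
    also have "\<dots> = real P ^ n * \<epsilon>" by (simp add: cardB)
    finally show ?thesis .
  qed
  have E2: "norm (\<Sum>x\<in>B. (w x - avg) * G (cv x)) \<le> 2 * real n * real q * real P ^ (2*d)"
  proof -
    define m where "m = P div q"
    define B' where "B' = PiE I (\<lambda>_. {1..int (q*m)})"
    have qm: "q * m \<le> P" unfolding m_def by (simp add: mult.commute)
    have qmi: "int q * int m \<le> int P" using qm by (metis of_nat_le_iff of_nat_mult)
    have sub: "B' \<subseteq> B" unfolding B'_def B_def using qmi by (intro PiE_mono) auto
    have z: "(\<Sum>x\<in>B'. (w x - avg) * G (cv x)) = 0"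
      using block_zero[OF q1, where d=d and m=m and a=a and \<beta>=\<beta>] by (simp add: B'_def I_def n_def w_def avg_def G_def cv_def)
    have "(\<Sum>x\<in>B. (w x - avg) * G (cv x)) = (\<Sum>x\<in>B - B'. (w x - avg) * G (cv x)) + (\<Sum>x\<in>B'. (w x - avg) * G (cv x))"
      by (rule sum.subset_diff[OF sub finB])
    hence "norm (\<Sum>x\<in>B. (w x - avg) * G (cv x)) = norm (\<Sum>x\<in>B - B'. (w x - avg) * G (cv x))" using z by simp
    also have "\<dots> \<le> (\<Sum>x\<in>B - B'. 2)"
    proof (rule sum_norm_le)
      fix x
      have "norm (w x - avg) \<le> norm (w x) + norm avg" by (rule norm_triangle_ineq4)
      also have "\<dots> \<le> 2" using navg by (simp add: w_def)
      finally show "norm ((w x - avg) * G (cv x)) \<le> 2" by (simp add: norm_mult G_def)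
    qed
    also have "\<dots> = 2 * real (card (B - B'))" by simp
    also have "card (B - B') = P ^ n - (q*m) ^ n"
      using card_Diff_subset[OF finite_subset[OF sub finB] sub] cardB card_cube[OF finI, of "q*m"]
      by (simp add: B'_def cardI)
    also have "real (P ^ n - (q*m) ^ n) = real P ^ n - real (q*m) ^ n"
      using qm by (simp add: of_nat_diff power_mono)
    also have "\<dots> \<le> real n * real P ^ (n-1) * real q"
    proof -
      have Pm: "real P - real (q*m) \<le> real q"
      proof -
        have "P = q*m + P mod q" unfolding m_def by simp
        moreover have "P mod q < q" using q1 by simp
        ultimately show ?thesis by linarith
      qed
      have "\<bar>real P ^ n - real (q*m) ^ n\<bar> \<le> real n * real P ^ (n-1) * (real P - real (q*m))"
      proof -
        have "real (q*m) \<le> real P" using qm by (simp only: of_nat_le_iff)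
        hence h1: "0 \<le> real P" "real P \<le> real P" "0 \<le> real (q*m)" "real (q*m) \<le> real P"
          "\<bar>real P - real (q*m)\<bar> \<le> real P - real (q*m)" by linarith+
        show ?thesis by (rule pow_lip[where a="real P" and b="real (q*m)" and P="real P" and D="real P - real (q*m)" and d=n, OF h1])
      qed
      also have "\<dots> \<le> real n * real P ^ (n-1) * real q" by (intro mult_left_mono Pm) auto
      finally show ?thesis by simp
    qed
    finally show ?thesis by (simp add: n_def algebra_simps)
  qed
  have E3: "norm (II d P \<beta> - (\<Sum>x\<in>B. G (cv x))) \<le> real P ^ n * \<epsilon>"
  proof -
    have "norm ((LINT \<xi>:PiE I (\<lambda>_. {0..real P})|PiM I (\<lambda>_. lborel). G \<xi>) - (\<Sum>x\<in>PiE I (\<lambda>_. {1..int P}). G (cv x)))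
           \<le> real P ^ card I * \<epsilon>"
    proof (rule riemann_cmp[OF finI P])
      show "G \<in> borel_measurable (PiM I (\<lambda>_. lborel))" unfolding G_def by (rule G_meas)
      show "\<And>\<xi>. norm (G \<xi>) \<le> 1" by (simp add: G_def)
      fix x \<xi> assume x: "x \<in> PiE I (\<lambda>_. {1..int P})" and c: "\<xi> \<in> cell I x"
      show "norm (G \<xi> - G (cv x)) \<le> \<epsilon>"
      proof (rule lip)
        show "x \<in> B" using x by (simp add: B_def)
        fix i assume i: "i \<in> I"
        have "\<xi> i \<in> (if x i = 1 then {0..1} else {real_of_int (x i) - 1 <.. real_of_int (x i)})"
          using PiE_mem[OF c[unfolded cell_def] i] by simp
        thus "real_of_int (x i) - 1 \<le> \<xi> i \<and> \<xi> i \<le> real_of_int (x i)" by (auto split: if_splits)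
      qed
    qed
    thus ?thesis by (simp add: II_def G_def I_def n_def B_def cardI)
  qed
  have decomp: "FF d P \<alpha> - avg * II d P \<beta> =
      (\<Sum>x\<in>B. w x * (G (\<lambda>i. real_of_int (x i)) - G (cv x))) + (\<Sum>x\<in>B. (w x - avg) * G (cv x))
      - avg * (II d P \<beta> - (\<Sum>x\<in>B. G (cv x)))"
    unfolding FFe by (simp add: algebra_simps sum_subtractf sum_distrib_left sum.distrib)
  have coef: "complex_of_real (1 / real q ^ (2*d+1)) * SS d q a = avg"
    by (simp add: avg_def n_def field_simps)
  have "cmod (FF d P \<alpha> - complex_of_real (1 / real q ^ (2*d+1)) * SS d q a * II d P (\<alpha> - real a / real q))
      = norm (FF d P \<alpha> - avg * II d P \<beta>)" by (simp only: coef \<beta>_def)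
  also have "\<dots> \<le> real P ^ n * \<epsilon> + 2 * real n * real q * real P ^ (2*d) + 1 * (real P ^ n * \<epsilon>)"
    unfolding decomp by (rule tri3[OF E1 E2 navg E3])
  also have "\<dots> \<le> (4*pi*(3*real d*2^d) + 2*real(2*d+1)) * real P powr (2*real d + 2*\<delta>)"
  proof -
    have e1: "real P ^ n * \<epsilon> = real P ^ (2*d+1) * (2*pi*\<bar>\<beta>\<bar> * L * real P ^ (d-1) * real q)"
      by (simp add: n_def \<epsilon>_def)
    have f1: "real P ^ n * \<epsilon> \<le> 2*pi*L * real P powr (2*real d + 2*\<delta>)"
      unfolding e1 by (rule final_arith1[OF P \<beta>b qP d L0])
    have f2: "2 * real n * real q * real P ^ (2*d) \<le> 2 * real n * real P powr (2*real d + 2*\<delta>)"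
      by (rule final_arith2[OF P qP \<delta>])
    have e2: "(4*pi*(3*real d*2^d) + 2*real(2*d+1)) * real P powr (2*real d + 2*\<delta>)
       = 2 * (2*pi*L * real P powr (2*real d + 2*\<delta>)) + 2 * real n * real P powr (2*real d + 2*\<delta>)"
      by (simp add: L_def n_def algebra_simps)
    show ?thesis unfolding e2 using f1 f2 by linarith
  qed
  finally show ?thesis .
qed



lemma wrap:
  fixes d P q a :: nat and \<alpha> \<delta> :: real
  assumes d: "d \<ge> 1" and P: "1 \<le> P" and qa: "1 \<le> q \<and> real q \<le> real P powr \<delta> \<and> 1 \<le> a \<and> a \<le> q \<and> coprime a q"
    and h: "0 < \<delta> \<and> \<delta> \<le> 1" and am: "\<alpha> \<in> major_arc d \<delta> P q a"
  shows "cmod (FF d P \<alpha> - complex_of_real (1 / real q ^ (2*d+1)) * SS d q a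
                   * II d P (\<alpha> - real a / real q))
             \<le> (4*pi*(3*real d*2^d) + 2*real(2*d+1)) * real P powr (2 * real d + 2 * \<delta>)"
proof -
  have q1: "1 \<le> q" and qP: "real q \<le> real P powr \<delta>" using qa by auto
  have d0: "0 < \<delta>" using h by auto
  show ?thesis using main_bound[OF d P q1 qP d0 am] by simp
qed



theorem lemma3p1:
  fixes d :: nat
  assumes "d \<ge> 1"
  shows "\<exists>\<delta>0>0. \<exists>C. \<forall>\<delta>::real. 0 < \<delta> \<and> \<delta> \<le> \<delta>0 \<longrightarrow>
    (\<exists>P0. \<forall>P::nat. P \<ge> P0 \<longrightarrow>
      (\<forall>q a :: nat. 1 \<le> q \<and> real q \<le> real P powr \<delta> \<and> 1 \<le> a \<and> a \<le> q \<and> coprime a q \<longrightarrow>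
        (\<forall>\<alpha>\<in>major_arc d \<delta> P q a.
           cmod (FF d P \<alpha> - complex_of_real (1 / real q ^ (2*d+1)) * SS d q a
                   * II d P (\<alpha> - real a / real q))
             \<le> C * real P powr (2 * real d + 2 * \<delta>))))"
  apply (rule exI[of _ "1::real"])
  apply (rule conjI)
   apply simp
  apply (rule exI[of _ "4*pi*(3*real d*2^d) + 2*real(2*d+1)"])
  apply (intro allI impI)
  apply (rule exI[of _ "1::nat"])
  apply (intro allI impI ballI)
  apply (rule wrap[OF assms])
     apply assumption+
  done


end
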